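(* Let $n\ge 3$ and let $A_1A_2\dots A_n$ be a polygon in the Euclidean plane, with vertex indices taken modulo $n$. Let $M$ be a point of the plane distinct from all vertices. Suppose that for every $i\in\{1,\dots,n\}$ and every $j\in\{1,\dots,n\}$ with $j\notin\{i,i-1\}$ (mod $n$), the line $A_iM$ meets the line $A_jA_{j+1}$ in a single point $M_{ij}$, and that $M_{ij}\notin\{A_j,A_{j+1}\}$. Then $$\prod_{\substack{i,j=1\\ j\notin\{i,\,i-1\}}}^{n}\frac{\overline{M_{ij}A_j}}{\overline{M_{ij}A_{j+1}}}=(-1)^n .$$
   Context: For three collinear points $X,Y,Z$ with $X\neq Z$, $\frac{\overline{XY}}{\overline{XZ}}$ denotes the ratio of signed (directed) lengths along their common line: it equals $|XY|/|XZ|$ if $Y$ and $Z$ lie on the same side of $X$ on that line, and $-|XY|/|XZ|$ otherwise. *)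

theory Defs
  imports "HOL-Analysis.Analysis"
begin

text \<open>Signed ratio of directed lengths XY / XZ for collinear X, Y, Z with X \<noteq> Z:
  positive iff Y and Z lie on the same side of X (i.e. Y lies on the ray from X through Z).\<close>
definition sratio :: "real^2 \<Rightarrow> real^2 \<Rightarrow> real^2 \<Rightarrow> real" where
  "sratio X Y Z =
     (if (\<exists>t\<ge>0. Y - X = t *\<^sub>R (Z - X)) then dist X Y / dist X Z
      else - (dist X Y / dist X Z))"

end

theory Submission
  imports Defs
begin


definition cr :: "real^2 \<Rightarrow> real^2 \<Rightarrow> real" where
  "cr u v = u$1 * v$2 - u$2 * v$1"

lemma cr_smult: "cr u (a *\<^sub>R v) = a * cr u v"
  by (simp add: cr_def algebra_simps)
lemma cr_diff: "cr u (v - w) = cr u v - cr u w"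
  by (simp add: cr_def algebra_simps)
lemma cr_self: "cr u u = 0"
  by (simp add: cr_def)

lemma cr_col:
  assumes "cr u v = 0" "u \<noteq> 0"
  shows "\<exists>s. v = s *\<^sub>R u"
proof -
  have h: "u$1 * v$2 = u$2 * v$1" using assms(1) by (simp add: cr_def)
  have "u$1 \<noteq> 0 \<or> u$2 \<noteq> 0" using assms(2) by (auto simp: vec_eq_iff forall_2)
  then show ?thesis
  proof
    assume a: "u$1 \<noteq> 0"
    have "v = (v$1 / u$1) *\<^sub>R u" using a h
      by (auto simp: vec_eq_iff forall_2 field_simps)
    then show ?thesis by blast
  next
    assume a: "u$2 \<noteq> 0"
    have "v = (v$2 / u$2) *\<^sub>R u" using a h
      by (auto simp: vec_eq_iff forall_2 field_simps)
    then show ?thesis by blast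
  qed
qed

lemma key:
  fixes Ai M Aj B p :: "real^2"
  assumes AM: "Ai \<noteq> M" and AB: "Aj \<noteq> B"
    and I: "affine hull {Ai, M} \<inter> affine hull {Aj, B} = {p}"
    and pA: "p \<noteq> Aj" and pB: "p \<noteq> B"
  shows "sratio p Aj B = cr (M - Ai) (Aj - Ai) / cr (M - Ai) (B - Ai)"
    and "cr (M - Ai) (B - Ai) \<noteq> 0" and "cr (M - Ai) (Aj - Ai) \<noteq> 0"
proof -
  have p1: "p \<in> affine hull {Aj, B}" and p2: "p \<in> affine hull {Ai, M}" using I by auto
  obtain u v where uv: "p = u *\<^sub>R Aj + v *\<^sub>R B" "u + v = 1"
    using p1 unfolding affine_hull_2 by blast
  obtain a b where ab: "p = a *\<^sub>R Ai + b *\<^sub>R M" "a + b = 1"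
    using p2 unfolding affine_hull_2 by blast
  define f where "f X = cr (M - Ai) (X - Ai)" for X
  have a1: "a = 1 - b" using ab(2) by simp
  have "p - Ai = b *\<^sub>R (M - Ai)" using ab(1) unfolding a1
    by (simp add: algebra_simps)
  then have fp: "f p = 0" by (simp add: f_def cr_smult cr_self)
  have u0: "u \<noteq> 0" using uv pB by auto
  have v0: "v \<noteq> 0" using uv pA by auto
  define t where "t = - v / u"
  have t0: "t \<noteq> 0" using u0 v0 by (simp add: t_def)
  have u1: "u = 1 - v" using uv(2) by simp
  have e1: "Aj - p = v *\<^sub>R (Aj - B)" using uv(1) unfolding u1
    by (simp add: algebra_simps)
  have v1: "v = 1 - u" using uv(2) by simp
  have e2: "B - p = u *\<^sub>R (B - Aj)" using uv(1) unfolding v1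
    by (simp add: algebra_simps)
  have tu: "t * u = - v" using u0 by (simp add: t_def)
  have "t *\<^sub>R (B - p) = (t * u) *\<^sub>R (B - Aj)" using e2 by simp
  also have "\<dots> = v *\<^sub>R (Aj - B)" unfolding tu by (simp add: algebra_simps)
  finally have et: "Aj - p = t *\<^sub>R (B - p)" using e1 by simp
  have Bp: "B - p \<noteq> 0" using pB by simp
  have dA: "dist p Aj = \<bar>v\<bar> * norm (Aj - B)" using e1 by (simp add: dist_norm norm_minus_commute)
  have dB: "dist p B = \<bar>u\<bar> * norm (Aj - B)" using e2 by (simp add: dist_norm norm_minus_commute)
  have nAB: "norm (Aj - B) \<noteq> 0" using AB by simp
  have rat: "dist p Aj / dist p B = \<bar>t\<bar>" using dA dB nAB u0
    by (simp add: t_def abs_divide)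
  have sr: "sratio p Aj B = t"
  proof (cases "t \<ge> 0")
    case True
    then show ?thesis using et rat by (auto simp: sratio_def)
  next
    case False
    have "\<not> (\<exists>s\<ge>0. Aj - p = s *\<^sub>R (B - p))"
    proof
      assume "\<exists>s\<ge>0. Aj - p = s *\<^sub>R (B - p)"
      then obtain s where s: "s \<ge> 0" "Aj - p = s *\<^sub>R (B - p)" by blast
      then have "(s - t) *\<^sub>R (B - p) = 0" using et by (simp add: algebra_simps)
      then have "s = t" using Bp by simp
      then show False using s False by simp
    qed
    then show ?thesis using rat False by (simp add: sratio_def)
  qed
  have fAj: "f Aj = t * f B"
  proof -
    have "f Aj = f p + cr (M - Ai) (Aj - p)" by (simp add: f_def cr_diff)
    also have "\<dots> = t * (f B - f p)" using fp et by (simp add: f_def cr_smult cr_diff)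
    finally show ?thesis using fp by simp
  qed
  have fB: "f B \<noteq> 0"
  proof
    assume fB0: "f B = 0"
    have MA: "M - Ai \<noteq> 0" using AM by simp
    have inl: "X \<in> affine hull {Ai, M}" if "f X = 0" for X
    proof -
      have c0: "cr (M - Ai) (X - Ai) = 0" using that by (simp add: f_def)
      obtain s where "X - Ai = s *\<^sub>R (M - Ai)" using cr_col[OF c0 MA] by blast
      then have "X = (1 - s) *\<^sub>R Ai + s *\<^sub>R M" by (simp add: algebra_simps)
      then show ?thesis unfolding affine_hull_2 by force
    qed
    have "B \<in> affine hull {Ai, M}" using inl fB0 by simp
    moreover have "Aj \<in> affine hull {Ai, M}" using inl fB0 fAj by simp
    moreover have "B \<in> affine hull {Aj, B}" "Aj \<in> affine hull {Aj, B}" by (auto intro: hull_inc)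
    ultimately have "B \<in> {p}" "Aj \<in> {p}" using I by blast+
    then show False using AB by simp
  qed
  show "cr (M - Ai) (B - Ai) \<noteq> 0" using fB by (simp add: f_def)
  show "cr (M - Ai) (Aj - Ai) \<noteq> 0" using fB fAj t0 by (simp add: f_def)
  show "sratio p Aj B = cr (M - Ai) (Aj - Ai) / cr (M - Ai) (B - Ai)"
    using sr fAj fB by (simp add: f_def)
qed


lemma cr_swap: "cr (M - b) (a - b) = - cr (M - a) (b - a)"
  by (simp add: cr_def algebra_simps)

theorem mainTheorem3:
  fixes n :: nat and A :: "nat \<Rightarrow> real^2" and M :: "real^2"
    and P :: "nat \<Rightarrow> nat \<Rightarrow> real^2"
  assumes n3: "n \<ge> 3"
    and polygon: "\<forall>j<n. A j \<noteq> A (Suc j mod n)"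
    and M_nv: "\<forall>i<n. M \<noteq> A i"
    and inter: "\<forall>i<n. \<forall>j<n. j \<noteq> i \<and> Suc j mod n \<noteq> i \<longrightarrow>
        affine hull {A i, M} \<inter> affine hull {A j, A (Suc j mod n)} = {P i j}"
    and notv: "\<forall>i<n. \<forall>j<n. j \<noteq> i \<and> Suc j mod n \<noteq> i \<longrightarrow>
        P i j \<notin> {A j, A (Suc j mod n)}"
  shows "(\<Prod>i<n. \<Prod>j\<in>{j. j < n \<and> j \<noteq> i \<and> Suc j mod n \<noteq> i}.
            sratio (P i j) (A j) (A (Suc j mod n))) = (-1) ^ n"
proof -
  define nx where "nx j = Suc j mod n" for j
  define pv where "pv i = (i + n - 1) mod n" for i
  define F where "F i k = cr (M - A i) (A k - A i)" for i k
  define G where "G j = F j (nx j)" for j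
  have nx_eq: "nx j = (if Suc j = n then 0 else Suc j)" if "j < n" for j
    using that by (auto simp: nx_def)
  have pv_eq: "pv i = (if i = 0 then n - 1 else i - 1)" if "i < n" for i
  proof (cases "i = 0")
    case True then show ?thesis using n3 by (simp add: pv_def)
  next
    case False
    have "i + n - 1 = (i - 1) + n" using False by simp
    then have "pv i = ((i - 1) + n) mod n" by (simp add: pv_def)
    also have "\<dots> = (i - 1) mod n" by simp
    also have "\<dots> = i - 1" using that by simp
    finally show ?thesis using False by simp
  qed
  have nx_lt: "nx j < n" if "j < n" for j using that n3 by (auto simp: nx_eq)
  have pv_lt: "pv j < n" if "j < n" for j using that n3 by (auto simp: pv_eq)
  have nx_pv: "nx (pv i) = i" if "i < n" for i using that n3 by (auto simp: pv_eq nx_eq pv_lt)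
  have pv_nx: "pv (nx i) = i" if "i < n" for i using that n3 by (auto simp: pv_eq nx_eq nx_lt)
  have nx_ne: "nx i \<noteq> i" if "i < n" for i using that n3 by (auto simp: nx_eq)
  have pv_ne: "pv i \<noteq> i" if "i < n" for i using that n3 by (auto simp: pv_eq)
  have nxnx: "nx (nx i) \<noteq> i" if "i < n" for i using that n3 by (auto simp: nx_eq nx_lt)
  have nx_iff: "nx j = i \<longleftrightarrow> j = pv i" if "i < n" "j < n" for i j
    using that nx_pv pv_nx by metis
  have K: "sratio (P i j) (A j) (A (nx j)) = F i j / F i (nx j) \<and> F i (nx j) \<noteq> 0 \<and> F i j \<noteq> 0"
    if "i < n" "j < n" "j \<noteq> i" "nx j \<noteq> i" for i j
  proof -
    have h1: "A i \<noteq> M" using M_nv that by metis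
    have h2: "A j \<noteq> A (nx j)" using polygon that unfolding nx_def by blast
    have h3: "affine hull {A i, M} \<inter> affine hull {A j, A (nx j)} = {P i j}"
      using inter that unfolding nx_def by blast
    have h4: "P i j \<noteq> A j" "P i j \<noteq> A (nx j)"
      using notv that unfolding nx_def by blast+
    show ?thesis using key[OF h1 h2 h3 h4] unfolding F_def by blast
  qed
  have NZ: "F i k \<noteq> 0" if "i < n" "k < n" "k \<noteq> i" for i k
  proof (cases "nx k = i")
    case False then show ?thesis using K that by blast
  next
    case True
    then have kp: "k = pv i" using nx_iff that by blast
    define j where "j = pv k"
    have j1: "j < n" using pv_lt that by (simp add: j_def)
    have j2: "nx j = k" using nx_pv that by (simp add: j_def)
    have j3: "j \<noteq> i"
    proof
      assume "j = i"
      then have "nx i = k" using j2 by simp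
      then have "nx (nx i) = i" using True by simp
      then show False using nxnx that by blast
    qed
    show ?thesis using K[OF that(1) j1 j3] j2 that by simp
  qed
  have step1: "(\<Prod>j\<in>{j. j < n \<and> j \<noteq> i \<and> Suc j mod n \<noteq> i}.
            sratio (P i j) (A j) (A (Suc j mod n))) = F i (nx i) / F i (pv i)" if i: "i < n" for i
  proof -
    define S where "S = {..<n} - {i} - {pv i}"
    have SS: "{j. j < n \<and> j \<noteq> i \<and> Suc j mod n \<noteq> i} = S"
      using nx_iff[OF i] unfolding S_def nx_def by auto
    have "(\<Prod>j\<in>{j. j < n \<and> j \<noteq> i \<and> Suc j mod n \<noteq> i}.
            sratio (P i j) (A j) (A (Suc j mod n))) = (\<Prod>j\<in>S. F i j / F i (nx j))"
      unfolding SS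
    proof (rule prod.cong)
      fix j assume "j \<in> S"
      then have "j < n" "j \<noteq> i" "nx j \<noteq> i" using nx_iff[OF i] by (auto simp: S_def)
      then show "sratio (P i j) (A j) (A (Suc j mod n)) = F i j / F i (nx j)"
        using K[OF i] unfolding nx_def by blast
    qed simp
    also have "\<dots> = (\<Prod>j\<in>S. F i j) / (\<Prod>j\<in>S. F i (nx j))" by (rule prod_dividef)
    also have "(\<Prod>j\<in>S. F i (nx j)) = (\<Prod>k\<in>nx ` S. F i k)"
    proof -
      have "inj_on nx S" unfolding S_def by (rule inj_on_inverseI[where g=pv]) (use pv_nx in auto)
      then show ?thesis by (simp add: prod.reindex)
    qed
    also have "nx ` S = {..<n} - {i} - {nx i}"
    proof
      show "nx ` S \<subseteq> {..<n} - {i} - {nx i}"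
      proof
        fix k assume "k \<in> nx ` S"
        then obtain j where j: "j \<in> S" "k = nx j" by blast
        then have j1: "j < n" "j \<noteq> i" "j \<noteq> pv i" unfolding S_def by auto
        have "k < n" using j(2) j1(1) nx_lt by simp
        moreover have "k \<noteq> i" using nx_iff[OF i j1(1)] j(2) j1(3) by simp
        moreover have "k \<noteq> nx i"
        proof
          assume "k = nx i"
          then have "pv k = i" using pv_nx i by simp
          moreover have "pv k = j" using j(2) pv_nx j1(1) by simp
          ultimately show False using j1(2) by simp
        qed
        ultimately show "k \<in> {..<n} - {i} - {nx i}" by simp
      qed
      show "{..<n} - {i} - {nx i} \<subseteq> nx ` S"
      proof
        fix k assume k: "k \<in> {..<n} - {i} - {nx i}"
        have k1: "k < n" "k \<noteq> i" "k \<noteq> nx i" using k by auto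
        have "pv k < n" using pv_lt k1(1) by simp
        moreover have "pv k \<noteq> i"
        proof
          assume "pv k = i"
          then have "nx (pv k) = nx i" by simp
          then show False using nx_pv[OF k1(1)] k1(3) by simp
        qed
        moreover have "pv k \<noteq> pv i"
        proof
          assume "pv k = pv i"
          then have "nx (pv k) = nx (pv i)" by simp
          then show False using nx_pv[OF k1(1)] nx_pv[OF i] k1(2) by simp
        qed
        ultimately have "pv k \<in> S" unfolding S_def by simp
        moreover have "k = nx (pv k)" using k nx_pv by auto
        ultimately show "k \<in> nx ` S" by blast
      qed
    qed
    finally have E: "(\<Prod>j\<in>{j. j < n \<and> j \<noteq> i \<and> Suc j mod n \<noteq> i}.
            sratio (P i j) (A j) (A (Suc j mod n))) = (\<Prod>j\<in>S. F i j) / (\<Prod>k\<in>{..<n} - {i} - {nx i}. F i k)" .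
    define Q where "Q = (\<Prod>k\<in>{..<n} - {i}. F i k)"
    have Q0: "Q \<noteq> 0" unfolding Q_def using NZ[OF i] by (auto simp: prod_zero_iff)
    have Q1: "Q = F i (pv i) * (\<Prod>j\<in>S. F i j)" unfolding Q_def S_def
      by (rule prod.remove) (use pv_lt pv_ne i in auto)
    have Q2: "Q = F i (nx i) * (\<Prod>k\<in>{..<n} - {i} - {nx i}. F i k)" unfolding Q_def
      by (rule prod.remove) (use nx_lt nx_ne i in auto)
    have a: "F i (pv i) \<noteq> 0" using NZ pv_lt pv_ne i by blast
    have b: "F i (nx i) \<noteq> 0" using NZ nx_lt nx_ne i by blast
    have c1: "(\<Prod>j\<in>S. F i j) = Q / F i (pv i)" using Q1 a by simp
    have c2: "(\<Prod>k\<in>{..<n} - {i} - {nx i}. F i k) = Q / F i (nx i)" using Q2 b by simp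
    show ?thesis unfolding E c1 c2 using Q0 a b by (simp add: field_simps)
  qed
  have "(\<Prod>i<n. \<Prod>j\<in>{j. j < n \<and> j \<noteq> i \<and> Suc j mod n \<noteq> i}.
            sratio (P i j) (A j) (A (Suc j mod n))) = (\<Prod>i<n. G i / F i (pv i))"
    using step1 by (simp add: G_def)
  also have "\<dots> = (\<Prod>i<n. G i) / (\<Prod>i<n. F i (pv i))" by (rule prod_dividef)
  also have "(\<Prod>i<n. F i (pv i)) = (\<Prod>i<n. (-1) * G (pv i))"
  proof (rule prod.cong)
    fix i assume "i \<in> {..<n}"
    then have "nx (pv i) = i" using nx_pv by simp
    then show "F i (pv i) = (-1) * G (pv i)"
      unfolding F_def G_def using cr_swap[of M "A i" "A (pv i)"] by simp
  qed simp
  also have "\<dots> = (-1) ^ n * (\<Prod>i<n. G (pv i))"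
    by (subst prod.distrib) simp
  also have "(\<Prod>i<n. G (pv i)) = (\<Prod>i<n. G i)"
  proof -
    have inj: "inj_on pv {..<n}" by (rule inj_on_inverseI[where g=nx]) (use nx_pv in auto)
    have im: "pv ` {..<n} = {..<n}"
    proof
      show "pv ` {..<n} \<subseteq> {..<n}" using pv_lt by auto
      show "{..<n} \<subseteq> pv ` {..<n}"
      proof
        fix k assume "k \<in> {..<n}"
        then have "k = pv (nx k)" "nx k \<in> {..<n}" using pv_nx nx_lt by auto
        then show "k \<in> pv ` {..<n}" by blast
      qed
    qed
    have "(\<Prod>i<n. G (pv i)) = (\<Prod>i\<in>pv ` {..<n}. G i)" using inj by (simp add: prod.reindex)
    then show ?thesis using im by simp
  qed
  finally have fin: "(\<Prod>i<n. \<Prod>j\<in>{j. j < n \<and> j \<noteq> i \<and> Suc j mod n \<noteq> i}.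
            sratio (P i j) (A j) (A (Suc j mod n))) = (\<Prod>i<n. G i) / ((- 1) ^ n * (\<Prod>i<n. G i))" .
  have G0: "(\<Prod>i<n. G i) \<noteq> 0" using NZ nx_lt nx_ne by (auto simp: G_def prod_zero_iff)
  have cc: "((-1::real) ^ n) * (-1) ^ n = 1" by (simp flip: power_mult_distrib)
  have "(\<Prod>i<n. G i) / ((- 1) ^ n * (\<Prod>i<n. G i)) = inverse ((-1::real) ^ n)"
    using G0 by (simp add: divide_inverse)
  also have "\<dots> = (-1) ^ n" using cc by (rule inverse_unique)
  finally show ?thesis using fin by simp
qed

end
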